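(* Let $(G,\mu,[R])$ be a random-predicate $k$-player projection game, let $n\geqslant1$ and $i,p\in[k]$. Then $\mathbf{val}(\mathcal{T}^i_p(G)^{\otimes n})\geqslant\mathbf{val}(G^{\otimes n})^2$.
   Context: A random-predicate $k$-player game $(G,\mu,[R])$ has finite question sets $\mathcal{X}_j$, finite answer sets $\mathcal{A}_j$, a distribution $\mu$ on $\mathcal{X}_1\times\cdots\times\mathcal{X}_k$, and predicates $V_r$, $r\in[R]$; the verifier samples $q\sim\mu$ and $r\in[R]$ uniformly and independently, player $j$ answers $\alpha^j(q|_j)$ ($q|_j$ the $j$-th coordinate), and accepts iff $V_r(q,\text{answers})=1$. It is a projection game if for every $q$ and $r$ there are $D\geqslant1$ and maps $\sigma^j:\mathcal{A}_j\to[D]$ with $V_r(q,(a^1,\dots,a^k))=1$ iff $\sigma^j(a^j)=\sigma^{j'}(a^{j'})$ for all $j\neq j'$. In $G^{\otimes n}$, pairs $(q_m,r_m)$, $m\in[n]$, are sampled independently, player $j$ receives the $j$-th coordinates of $q_1,\dots,q_n$ and answers via a function $\mathcal{X}_j^n\to\mathcal{A}_j^n$, and the verifier accepts iff $V_{r_m}$ accepts coordinate $m$ for every $m$; $\mathbf{val}$ is the maximum acceptance probability. The $i$-link distribution $L_i(G)$: sample $v\sim\mu|_i$, then $q,q'$ independently from $\mu$ conditioned on $q|_i=q'|_i=v$. For $q=(x^1,\dots,x^k)$, $q'=(y^1,\dots,y^k)$, $\Pi^p((q,q'))=(y^1,\dots,y^{p-1},x^p,y^{p+1},\dots,y^k)$.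 The game $\mathcal{T}^i_p(G)$: the verifier samples $(q,q')\sim L_i(G)$ and $r\in[R]$ uniformly and independently, sends the coordinates of $\Pi^p((q,q'))$ to the players, accepts by default if $q\neq q'$, and if $q=q'$ accepts the answers $a$ iff $V_r(q,a)=1$. In $\mathcal{T}^i_p(G)^{\otimes n}$ the triples $(q_m,q'_m,r_m)$, $m\in[n]$, are sampled independently, player $j$ receives the $j$-th coordinates of $\Pi^p((q_m,q'_m))$, $m\in[n]$, and the verifier accepts iff it accepts in every coordinate. *)

theory Defs
  imports "HOL-Probability.Probability"
begin

text \<open>Conventions: players are indexed 0..<k; a question tuple is a list of length k
  (entry j = question to player j); an answer tuple is a list of length k.
  Predicates are indexed by r in {..<R}.\<close>

definition strategies ::
  "nat \<Rightarrow> nat \<Rightarrow> (nat \<Rightarrow> 'x set) \<Rightarrow> (nat \<Rightarrow> 'a set) \<Rightarrow> (nat \<Rightarrow> 'x list \<Rightarrow> 'a list) set" where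
  "strategies k n X A = {f. \<forall>j<k. \<forall>ys. length ys = n \<and> set ys \<subseteq> X j \<longrightarrow>
       length (f j ys) = n \<and> set (f j ys) \<subseteq> A j}"

text \<open>Generic n-fold parallel repetition: each round m samples s_m from D independently;
  player j receives que s_m j in round m; the verifier accepts iff acc s_m (answers of round m)
  holds for every round m.\<close>
definition rep_accept_prob ::
  "nat \<Rightarrow> nat \<Rightarrow> 's pmf \<Rightarrow> ('s \<Rightarrow> nat \<Rightarrow> 'x) \<Rightarrow> ('s \<Rightarrow> 'a list \<Rightarrow> bool)
     \<Rightarrow> (nat \<Rightarrow> 'x list \<Rightarrow> 'a list) \<Rightarrow> real" where
  "rep_accept_prob k n D que acc f =
     measure_pmf.prob (Pi_pmf {..<n} undefined (\<lambda>_. D))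
       {ss. \<forall>m<n. acc (ss m)
              (map (\<lambda>j. f j (map (\<lambda>m'. que (ss m') j) [0..<n]) ! m) [0..<k])}"

definition rep_val ::
  "nat \<Rightarrow> nat \<Rightarrow> (nat \<Rightarrow> 'x set) \<Rightarrow> (nat \<Rightarrow> 'a set) \<Rightarrow> 's pmf \<Rightarrow> ('s \<Rightarrow> nat \<Rightarrow> 'x)
     \<Rightarrow> ('s \<Rightarrow> 'a list \<Rightarrow> bool) \<Rightarrow> real" where
  "rep_val k n X A D que acc =
     (SUP f \<in> strategies k n X A. rep_accept_prob k n D que acc f)"

definition rp_game ::
  "nat \<Rightarrow> (nat \<Rightarrow> 'x set) \<Rightarrow> (nat \<Rightarrow> 'a set) \<Rightarrow> 'x list pmf \<Rightarrow> nat
     \<Rightarrow> (nat \<Rightarrow> 'x list \<Rightarrow> 'a list \<Rightarrow> bool) \<Rightarrow> bool" where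
  "rp_game k X A mu R V \<longleftrightarrow> k \<ge> 1 \<and> R \<ge> 1 \<and>
     (\<forall>j<k. finite (X j) \<and> finite (A j) \<and> A j \<noteq> {}) \<and>
     (\<forall>q\<in>set_pmf mu. length q = k \<and> (\<forall>j<k. q ! j \<in> X j))"

definition projection_game ::
  "nat \<Rightarrow> (nat \<Rightarrow> 'x set) \<Rightarrow> (nat \<Rightarrow> 'a set) \<Rightarrow> nat
     \<Rightarrow> (nat \<Rightarrow> 'x list \<Rightarrow> 'a list \<Rightarrow> bool) \<Rightarrow> bool" where
  "projection_game k X A R V \<longleftrightarrow>
     (\<forall>q. length q = k \<and> (\<forall>j<k. q ! j \<in> X j) \<longrightarrow> (\<forall>r<R.
        \<exists>D::nat. D \<ge> 1 \<and> (\<exists>\<sigma> :: nat \<Rightarrow> 'a \<Rightarrow> nat.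
          (\<forall>j<k. \<forall>a\<in>A j. \<sigma> j a \<in> {1..D}) \<and>
          (\<forall>a. length a = k \<and> (\<forall>j<k. a ! j \<in> A j) \<longrightarrow>
             (V r q a \<longleftrightarrow> (\<forall>j<k. \<forall>j'<k. j \<noteq> j' \<longrightarrow> \<sigma> j (a ! j) = \<sigma> j' (a ! j')))))))"

definition val_rep ::
  "nat \<Rightarrow> (nat \<Rightarrow> 'x set) \<Rightarrow> (nat \<Rightarrow> 'a set) \<Rightarrow> 'x list pmf \<Rightarrow> nat
     \<Rightarrow> (nat \<Rightarrow> 'x list \<Rightarrow> 'a list \<Rightarrow> bool) \<Rightarrow> nat \<Rightarrow> real" where
  "val_rep k X A mu R V n =
     rep_val k n X A (pair_pmf mu (pmf_of_set {..<R}))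
       (\<lambda>(q, r) j. q ! j) (\<lambda>(q, r) a. V r q a)"

definition link_pmf :: "'x list pmf \<Rightarrow> nat \<Rightarrow> ('x list \<times> 'x list) pmf" where
  "link_pmf mu i =
     bind_pmf (map_pmf (\<lambda>q. q ! i) mu)
       (\<lambda>v. pair_pmf (cond_pmf mu {q. q ! i = v}) (cond_pmf mu {q. q ! i = v}))"

definition Pi_swap :: "nat \<Rightarrow> 'x list \<times> 'x list \<Rightarrow> 'x list" where
  "Pi_swap p qq = (snd qq)[p := fst qq ! p]"

definition val_T_rep ::
  "nat \<Rightarrow> (nat \<Rightarrow> 'x set) \<Rightarrow> (nat \<Rightarrow> 'a set) \<Rightarrow> 'x list pmf \<Rightarrow> nat
     \<Rightarrow> (nat \<Rightarrow> 'x list \<Rightarrow> 'a list \<Rightarrow> bool) \<Rightarrow> nat \<Rightarrow> nat \<Rightarrow> nat \<Rightarrow> real" where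
  "val_T_rep k X A mu R V i p n =
     rep_val k n X A (pair_pmf (link_pmf mu i) (pmf_of_set {..<R}))
       (\<lambda>(qq, r) j. Pi_swap p qq ! j)
       (\<lambda>((q, q'), r) a. q \<noteq> q' \<or> V r q a)"

end

theory Submission
  imports Defs
begin


lemma pair_Pi:
  fixes P :: "nat \<Rightarrow> 's pmf"
  shows "map_pmf (\<lambda>ss. ((\<lambda>m. if m<n then fst (ss m) else d1), (\<lambda>m. if m<n then snd (ss m) else d1)))
           (Pi_pmf {..<n} d2 (\<lambda>m. pair_pmf (P m) (P m)))
         = pair_pmf (Pi_pmf {..<n} d1 P) (Pi_pmf {..<n} d1 P)"
proof -
  have "Pi_pmf {..<n} d2 (\<lambda>m. pair_pmf (P m) (P m)) =
        Pi_pmf {..<n} d2 (\<lambda>m. bind_pmf (P m) (\<lambda>a. bind_pmf (P m) (\<lambda>b. return_pmf (a,b))))"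
    by (simp add: pair_pmf_def)
  also have "\<dots> = bind_pmf (Pi_pmf {..<n} d1 P) (\<lambda>f. Pi_pmf {..<n} d2 (\<lambda>m. bind_pmf (P m) (\<lambda>b. return_pmf (f m, b))))"
    by (rule Pi_pmf_bind) simp
  also have "\<dots> = bind_pmf (Pi_pmf {..<n} d1 P) (\<lambda>f. bind_pmf (Pi_pmf {..<n} d1 P) (\<lambda>g. Pi_pmf {..<n} d2 (\<lambda>m. return_pmf (f m, g m))))"
    by (subst Pi_pmf_bind[where d'=d1]) simp_all
  also have "\<dots> = bind_pmf (Pi_pmf {..<n} d1 P) (\<lambda>f. bind_pmf (Pi_pmf {..<n} d1 P) (\<lambda>g. return_pmf (\<lambda>m. if m \<in> {..<n} then (f m, g m) else d2)))"
    by simp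
  finally have eq: "Pi_pmf {..<n} d2 (\<lambda>m. pair_pmf (P m) (P m)) = \<dots>" .
  show ?thesis
    unfolding eq unfolding pair_pmf_def map_bind_pmf map_return_pmf
  proof (intro bind_pmf_cong refl)
    fix f g assume f: "f \<in> set_pmf (Pi_pmf {..<n} d1 P)" and g: "g \<in> set_pmf (Pi_pmf {..<n} d1 P)"
    have "\<forall>x. x \<notin> {..<n} \<longrightarrow> f x = d1" "\<forall>x. x \<notin> {..<n} \<longrightarrow> g x = d1"
      using set_Pi_pmf_subset[of "{..<n}" d1 P] f g by auto
    then show "return_pmf ((\<lambda>m. if m < n then fst (if m \<in> {..<n} then (f m, g m) else d2) else d1),
             (\<lambda>m. if m < n then snd (if m \<in> {..<n} then (f m, g m) else d2) else d1)) = return_pmf (f, g)"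
      by (auto simp: fun_eq_iff)
  qed
qed

lemma measure_bind_pmf_real:
  "measure_pmf.prob (bind_pmf M N) X = (\<integral>x. measure_pmf.prob (N x) X \<partial>measure_pmf M)"
proof -
  have int: "integrable (measure_pmf M) (\<lambda>x. measure_pmf.prob (N x) X)"
    by (rule measure_pmf.integrable_const_bound[where B=1]) auto
  have "emeasure (bind_pmf M N) X = (\<integral>\<^sup>+x. ennreal (measure_pmf.prob (N x) X) \<partial>M)"
    by (subst emeasure_bind_pmf) (simp add: measure_pmf.emeasure_eq_measure)
  also have "\<dots> = ennreal (\<integral>x. measure_pmf.prob (N x) X \<partial>measure_pmf M)"
    by (rule nn_integral_eq_integral[OF int]) auto
  finally show ?thesis
    by (simp add: measure_pmf.emeasure_eq_measure)
qed

lemma measure_pair_pmf_Times: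
  "measure_pmf.prob (pair_pmf A B) (X \<times> Y) = measure_pmf.prob A X * measure_pmf.prob B Y"
proof -
  have "pair_pmf A B = bind_pmf A (\<lambda>x. map_pmf (Pair x) B)"
    by (simp add: pair_pmf_def map_pmf_def)
  then have "measure_pmf.prob (pair_pmf A B) (X \<times> Y) = (\<integral>x. measure_pmf.prob B (Pair x -` (X \<times> Y)) \<partial>measure_pmf A)"
    by (simp add: measure_bind_pmf_real)
  also have "\<dots> = (\<integral>x. indicator X x * measure_pmf.prob B Y \<partial>measure_pmf A)"
    by (intro Bochner_Integration.integral_cong) (auto simp: indicator_def vimage_def)
  also have "\<dots> = measure_pmf.prob A X * measure_pmf.prob B Y"
    by simp
  finally show ?thesis .
qed

lemma pmf_jensen_sq:
  fixes g :: "'a \<Rightarrow> real"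
  assumes "\<And>x. 0 \<le> g x" "\<And>x. g x \<le> 1"
  shows "(\<integral>x. g x \<partial>measure_pmf M)\<^sup>2 \<le> (\<integral>x. (g x)\<^sup>2 \<partial>measure_pmf M)"
proof -
  have i1: "integrable (measure_pmf M) g"
    by (rule measure_pmf.integrable_const_bound[where B=1]) (use assms in auto)
  have i2: "integrable (measure_pmf M) (\<lambda>x. (g x)\<^sup>2)"
    by (rule measure_pmf.integrable_const_bound[where B=1]) (use assms in \<open>auto simp: abs_square_le_1\<close>)
  have "0 \<le> measure_pmf.variance M g" by (rule measure_pmf.variance_positive)
  also have "\<dots> = (\<integral>x. (g x)\<^sup>2 \<partial>measure_pmf M) - (\<integral>x. g x \<partial>measure_pmf M)\<^sup>2"
    by (rule measure_pmf.variance_eq[OF i1 i2])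
  finally show ?thesis by simp
qed

lemma core:
  fixes Zd :: "'z pmf" and K :: "'z \<Rightarrow> 's pmf" and W :: "(nat \<Rightarrow> 's) set"
  shows "(measure_pmf.prob (Pi_pmf {..<n} d1 (\<lambda>_. bind_pmf Zd K)) W)\<^sup>2 \<le>
     measure_pmf.prob (Pi_pmf {..<n} d2 (\<lambda>_. bind_pmf Zd (\<lambda>z. pair_pmf (K z) (K z))))
     {ss. (\<lambda>m. if m<n then fst (ss m) else d1) \<in> W \<and> (\<lambda>m. if m<n then snd (ss m) else d1) \<in> W}"
proof -
  define g where "g zs = measure_pmf.prob (Pi_pmf {..<n} d1 (\<lambda>m. K (zs m))) W" for zs :: "nat \<Rightarrow> 'z"
  have e1: "Pi_pmf {..<n} d1 (\<lambda>_. bind_pmf Zd K) =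
      bind_pmf (Pi_pmf {..<n} undefined (\<lambda>_. Zd)) (\<lambda>zs. Pi_pmf {..<n} d1 (\<lambda>m. K (zs m)))"
    by (rule Pi_pmf_bind) simp
  have e2: "Pi_pmf {..<n} d2 (\<lambda>_. bind_pmf Zd (\<lambda>z. pair_pmf (K z) (K z))) =
      bind_pmf (Pi_pmf {..<n} undefined (\<lambda>_. Zd)) (\<lambda>zs. Pi_pmf {..<n} d2 (\<lambda>m. pair_pmf (K (zs m)) (K (zs m))))"
    by (rule Pi_pmf_bind) simp
  have m1: "measure_pmf.prob (Pi_pmf {..<n} d1 (\<lambda>_. bind_pmf Zd K)) W =
      (\<integral>zs. g zs \<partial>measure_pmf (Pi_pmf {..<n} undefined (\<lambda>_. Zd)))"
    by (simp only: e1 measure_bind_pmf_real g_def)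
  have m2: "measure_pmf.prob (Pi_pmf {..<n} d2 (\<lambda>_. bind_pmf Zd (\<lambda>z. pair_pmf (K z) (K z))))
     {ss. (\<lambda>m. if m<n then fst (ss m) else d1) \<in> W \<and> (\<lambda>m. if m<n then snd (ss m) else d1) \<in> W}
     = (\<integral>zs. (g zs)\<^sup>2 \<partial>measure_pmf (Pi_pmf {..<n} undefined (\<lambda>_. Zd)))"
    unfolding e2 measure_bind_pmf_real
  proof (intro Bochner_Integration.integral_cong refl)
    fix zs :: "nat \<Rightarrow> 'z"
    let ?w = "\<lambda>ss. ((\<lambda>m. if m<n then fst (ss m) else d1), (\<lambda>m. if m<n then snd (ss m) else d1))"
    have "measure_pmf.prob (Pi_pmf {..<n} d2 (\<lambda>m. pair_pmf (K (zs m)) (K (zs m))))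
       {ss. (\<lambda>m. if m<n then fst (ss m) else d1) \<in> W \<and> (\<lambda>m. if m<n then snd (ss m) else d1) \<in> W}
       = measure_pmf.prob (map_pmf ?w (Pi_pmf {..<n} d2 (\<lambda>m. pair_pmf (K (zs m)) (K (zs m))))) (W \<times> W)"
      by (simp add: vimage_def)
    also have "\<dots> = measure_pmf.prob (pair_pmf (Pi_pmf {..<n} d1 (\<lambda>m. K (zs m))) (Pi_pmf {..<n} d1 (\<lambda>m. K (zs m)))) (W \<times> W)"
      by (simp only: pair_Pi)
    also have "\<dots> = (g zs)\<^sup>2"
      by (simp add: measure_pair_pmf_Times g_def power2_eq_square)
    finally show "measure_pmf.prob (Pi_pmf {..<n} d2 (\<lambda>m. pair_pmf (K (zs m)) (K (zs m))))
       {ss. (\<lambda>m. if m<n then fst (ss m) else d1) \<in> W \<and> (\<lambda>m. if m<n then snd (ss m) else d1) \<in> W}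
       = (g zs)\<^sup>2" .
  qed
  show ?thesis unfolding m1 m2
    by (rule pmf_jensen_sq) (auto simp: g_def)
qed



lemma bind_cond_mu:
  "bind_pmf (map_pmf (\<lambda>q. q ! i) mu) (\<lambda>v. cond_pmf mu {q. q ! i = v}) = mu"
proof (rule bind_cond_pmf_cancel)
  fix x y
  assume "x \<in> set_pmf (map_pmf (\<lambda>q. q ! i) mu)" "y \<in> set_pmf mu" "y ! i = x"
  then show "measure_pmf.prob mu {y. y ! i = x} = measure_pmf.prob (map_pmf (\<lambda>q. q ! i) mu) {x. y ! i = x}"
    by (simp add: vimage_def eq_commute)
qed auto

lemma E1:
  fixes mu :: "'x list pmf" and U :: "nat pmf"
  shows "pair_pmf mu U = bind_pmf (pair_pmf (map_pmf (\<lambda>q. q ! i) mu) U)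
     (\<lambda>(v,r). map_pmf (\<lambda>q. (q,r)) (cond_pmf mu {q. q ! i = v}))"
proof -
  define C where "C v = cond_pmf mu {q. q ! i = v}" for v
  have "bind_pmf (pair_pmf (map_pmf (\<lambda>q. q ! i) mu) U) (\<lambda>(v,r). map_pmf (\<lambda>q. (q,r)) (C v))
      = bind_pmf (map_pmf (\<lambda>q. q ! i) mu) (\<lambda>v. bind_pmf U (\<lambda>r. bind_pmf (C v) (\<lambda>q. return_pmf (q,r))))"
    by (simp add: pair_pmf_def bind_assoc_pmf bind_return_pmf map_pmf_def)
  also have "\<dots> = bind_pmf (map_pmf (\<lambda>q. q ! i) mu) (\<lambda>v. bind_pmf (C v) (\<lambda>q. bind_pmf U (\<lambda>r. return_pmf (q,r))))"
    by (subst bind_commute_pmf) (rule refl)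
  also have "\<dots> = bind_pmf (bind_pmf (map_pmf (\<lambda>q. q ! i) mu) C) (\<lambda>q. bind_pmf U (\<lambda>r. return_pmf (q,r)))"
    by (simp add: bind_assoc_pmf)
  also have "\<dots> = pair_pmf mu U"
    unfolding C_def bind_cond_mu by (simp add: pair_pmf_def)
  finally show ?thesis unfolding C_def by simp
qed

lemma E2:
  fixes mu :: "'x list pmf" and U :: "nat pmf"
  shows "pair_pmf (link_pmf mu i) U = map_pmf (\<lambda>((q,r),(q',r')). ((q,q'),r))
     (bind_pmf (pair_pmf (map_pmf (\<lambda>q. q ! i) mu) U)
     (\<lambda>z. pair_pmf ((\<lambda>(v,r). map_pmf (\<lambda>q. (q,r)) (cond_pmf mu {q. q ! i = v})) z)
                   ((\<lambda>(v,r). map_pmf (\<lambda>q. (q,r)) (cond_pmf mu {q. q ! i = v})) z)))"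
proof -
  define C where "C v = cond_pmf mu {q. q ! i = v}" for v
  have a: "map_pmf (\<lambda>((q,r),(q',r')). ((q,q'),r)) (pair_pmf (map_pmf (\<lambda>q. (q,r)) X) (map_pmf (\<lambda>q. (q,r)) X))
     = bind_pmf (pair_pmf X X) (\<lambda>qq. return_pmf (qq, r))" for X :: "'x list pmf" and r
  proof -
    have "pair_pmf (map_pmf (\<lambda>q. (q,r)) X) (map_pmf (\<lambda>q. (q,r)) X) = map_pmf (\<lambda>(a,b). ((a,r),(b,r))) (pair_pmf X X)"
      by (simp only: map_pair)
    then show ?thesis
      by (simp add: pmf.map_comp o_def split_beta map_pmf_def[symmetric])
  qed
  have "map_pmf (\<lambda>((q,r),(q',r')). ((q,q'),r))
     (bind_pmf (pair_pmf (map_pmf (\<lambda>q. q ! i) mu) U)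
     (\<lambda>z. pair_pmf ((\<lambda>(v,r). map_pmf (\<lambda>q. (q,r)) (C v)) z) ((\<lambda>(v,r). map_pmf (\<lambda>q. (q,r)) (C v)) z)))
    = bind_pmf (map_pmf (\<lambda>q. q ! i) mu) (\<lambda>v. bind_pmf U (\<lambda>r. bind_pmf (pair_pmf (C v) (C v)) (\<lambda>qq. return_pmf (qq, r))))"
    unfolding pair_pmf_def[of "map_pmf (\<lambda>q. q ! i) mu" U] map_bind_pmf
    by (simp add: bind_assoc_pmf bind_return_pmf a)
  also have "\<dots> = bind_pmf (map_pmf (\<lambda>q. q ! i) mu) (\<lambda>v. bind_pmf (pair_pmf (C v) (C v)) (\<lambda>qq. bind_pmf U (\<lambda>r. return_pmf (qq, r))))"
    by (subst bind_commute_pmf) (rule refl)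
  also have "\<dots> = pair_pmf (link_pmf mu i) U"
    unfolding link_pmf_def C_def pair_pmf_def[of "bind_pmf _ _" U] by (simp add: bind_assoc_pmf)
  finally show ?thesis unfolding C_def by simp
qed



lemma combine:
  fixes f :: "nat \<Rightarrow> 'x list \<Rightarrow> 'a list"
  assumes proj: "projection_game k X A R V" and strat: "f \<in> strategies k n X A"
    and ik: "i < k" and pk: "p < k"
    and hQ1: "\<forall>m<n. length (Q1 m) = k \<and> (\<forall>j<k. Q1 m ! j \<in> X j)"
    and hQ2: "\<forall>m<n. length (Q2 m) = k \<and> (\<forall>j<k. Q2 m ! j \<in> X j)"
    and hi: "\<forall>m<n. Q1 m ! i = Q2 m ! i" and hr: "\<forall>m<n. r m < R"
    and W1: "\<forall>m<n. V (r m) (Q1 m) (map (\<lambda>j. f j (map (\<lambda>m'. Q1 m' ! j) [0..<n]) ! m) [0..<k])"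
    and W2: "\<forall>m<n. V (r m) (Q2 m) (map (\<lambda>j. f j (map (\<lambda>m'. Q2 m' ! j) [0..<n]) ! m) [0..<k])"
  shows "\<forall>m<n. Q1 m \<noteq> Q2 m \<or>
     V (r m) (Q1 m) (map (\<lambda>j. f j (map (\<lambda>m'. Pi_swap p (Q1 m', Q2 m') ! j) [0..<n]) ! m) [0..<k])"
proof (intro allI impI)
  fix m assume mn: "m < n"
  show "Q1 m \<noteq> Q2 m \<or>
     V (r m) (Q1 m) (map (\<lambda>j. f j (map (\<lambda>m'. Pi_swap p (Q1 m', Q2 m') ! j) [0..<n]) ! m) [0..<k])"
  proof (cases "Q1 m = Q2 m")
    case False then show ?thesis by simp
  next
    case eq: True
    define qs1 where "qs1 j = map (\<lambda>m'. Q1 m' ! j) [0..<n]" for j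
    define qs2 where "qs2 j = map (\<lambda>m'. Q2 m' ! j) [0..<n]" for j
    define b1 where "b1 = map (\<lambda>j. f j (qs1 j) ! m) [0..<k]"
    define b2 where "b2 = map (\<lambda>j. f j (qs2 j) ! m) [0..<k]"
    define a where "a = map (\<lambda>j. f j (map (\<lambda>m'. Pi_swap p (Q1 m', Q2 m') ! j) [0..<n]) ! m) [0..<k]"
    have qsT: "map (\<lambda>m'. Pi_swap p (Q1 m', Q2 m') ! j) [0..<n] = (if j = p then qs1 j else qs2 j)"
      if "j < k" for j
      using hQ2 pk that by (auto simp: Pi_swap_def qs1_def qs2_def nth_list_update)
    have aj: "a ! j = (if j = p then b1 ! j else b2 ! j)" if "j < k" for j
      using that qsT[OF that] by (simp add: a_def b1_def b2_def)
    have qi: "qs1 i = qs2 i" using hi by (simp add: qs1_def qs2_def)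
    have bi: "b1 ! i = b2 ! i" using ik qi by (simp add: b1_def b2_def)
    have fv1: "f j (qs1 j) ! m \<in> A j" if "j < k" for j
    proof -
      have "length (qs1 j) = n \<and> set (qs1 j) \<subseteq> X j" using hQ1 that by (auto simp: qs1_def)
      then have "length (f j (qs1 j)) = n \<and> set (f j (qs1 j)) \<subseteq> A j"
        using strat that unfolding strategies_def by blast
      then show ?thesis using mn by auto
    qed
    have fv2: "f j (qs2 j) ! m \<in> A j" if "j < k" for j
    proof -
      have "length (qs2 j) = n \<and> set (qs2 j) \<subseteq> X j" using hQ2 that by (auto simp: qs2_def)
      then have "length (f j (qs2 j)) = n \<and> set (f j (qs2 j)) \<subseteq> A j"
        using strat that unfolding strategies_def by blast
      then show ?thesis using mn by auto
    qed
    have vb1: "length b1 = k \<and> (\<forall>j<k. b1 ! j \<in> A j)" using fv1 by (simp add: b1_def)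
    have vb2: "length b2 = k \<and> (\<forall>j<k. b2 ! j \<in> A j)" using fv2 by (simp add: b2_def)
    have va: "length a = k \<and> (\<forall>j<k. a ! j \<in> A j)" using vb1 vb2 aj by (simp add: a_def)
    have Qok: "length (Q1 m) = k \<and> (\<forall>j<k. Q1 m ! j \<in> X j)" using hQ1 mn by blast
    obtain D :: nat and \<sigma> :: "nat \<Rightarrow> 'a \<Rightarrow> nat" where
      iff: "\<And>a. length a = k \<and> (\<forall>j<k. a ! j \<in> A j) \<Longrightarrow>
             (V (r m) (Q1 m) a \<longleftrightarrow> (\<forall>j<k. \<forall>j'<k. j \<noteq> j' \<longrightarrow> \<sigma> j (a ! j) = \<sigma> j' (a ! j')))"
      using proj Qok hr mn unfolding projection_game_def by blast
    have V1: "V (r m) (Q1 m) b1" using W1 mn by (simp add: b1_def qs1_def)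
    have V2: "V (r m) (Q1 m) b2" using W2 mn eq by (simp add: b2_def qs2_def)
    have ag1: "\<forall>j<k. \<forall>j'<k. j \<noteq> j' \<longrightarrow> \<sigma> j (b1 ! j) = \<sigma> j' (b1 ! j')" using iff[OF vb1] V1 by blast
    have ag2: "\<forall>j<k. \<forall>j'<k. j \<noteq> j' \<longrightarrow> \<sigma> j (b2 ! j) = \<sigma> j' (b2 ! j')" using iff[OF vb2] V2 by blast
    have key: "\<sigma> j (a ! j) = \<sigma> i (b1 ! i)" if "j < k" for j
    proof (cases "j = p")
      case True
      show ?thesis
      proof (cases "j = i")
        case True then show ?thesis using \<open>j = p\<close> aj[OF that] by simp
      next
        case False
        have "a ! j = b1 ! j" using aj[OF that] \<open>j = p\<close> by simp
        moreover have "\<sigma> j (b1 ! j) = \<sigma> i (b1 ! i)" using ag1 that ik False by blast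
        ultimately show ?thesis by simp
      qed
    next
      case False
      have aj2: "a ! j = b2 ! j" using aj[OF that] False by simp
      show ?thesis
      proof (cases "j = i")
        case True then show ?thesis using aj2 bi by simp
      next
        case False
        have "\<sigma> j (b2 ! j) = \<sigma> i (b2 ! i)" using ag2 that ik False by blast
        then show ?thesis using aj2 bi by simp
      qed
    qed
    have "V (r m) (Q1 m) a" using iff[OF va] key by simp
    then show ?thesis by (simp add: a_def)
  qed
qed


lemma supp_B:
  fixes mu :: "'x list pmf" and R :: nat
  assumes R: "R \<ge> 1"
    and x: "x \<in> set_pmf (bind_pmf (pair_pmf (map_pmf (\<lambda>q. q ! i) mu) (pmf_of_set {..<R}))
     (\<lambda>z. pair_pmf ((\<lambda>(v,r). map_pmf (\<lambda>q. (q,r)) (cond_pmf mu {q. q ! i = v})) z)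
                   ((\<lambda>(v,r). map_pmf (\<lambda>q. (q,r)) (cond_pmf mu {q. q ! i = v})) z)))"
  shows "\<exists>q q' r. x = ((q,r),(q',r)) \<and> q \<in> set_pmf mu \<and> q' \<in> set_pmf mu \<and> q ! i = q' ! i \<and> r < R"
proof -
  from x obtain v r where vr: "v \<in> set_pmf (map_pmf (\<lambda>q. q ! i) mu)" "r \<in> set_pmf (pmf_of_set {..<R})"
    and x2: "x \<in> set_pmf (map_pmf (\<lambda>q. (q,r)) (cond_pmf mu {q. q ! i = v})) \<times>
                 set_pmf (map_pmf (\<lambda>q. (q,r)) (cond_pmf mu {q. q ! i = v}))"
    by auto
  from vr(1) obtain q0 where q0: "q0 \<in> set_pmf mu" "v = q0 ! i" by auto
  have ne: "set_pmf mu \<inter> {q. q ! i = v} \<noteq> {}" using q0 by auto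
  have "set_pmf (pmf_of_set {..<R}) = {..<R}" by (rule set_pmf_of_set) (use R in \<open>auto simp: lessThan_empty_iff\<close>)
  then have r: "r < R" using vr(2) by auto
  from x2 show ?thesis using set_cond_pmf[OF ne] r by auto
qed

lemma map_upt_if:
  "map (\<lambda>m'. g (if m' < n then a m' else b)) [0..<n] = map (\<lambda>m'. g (a m')) [0..<n]"
  by (rule map_cong) auto

lemma strat_ineq:
  fixes mu :: "'x list pmf" and f :: "nat \<Rightarrow> 'x list \<Rightarrow> 'a list"
  assumes game: "rp_game k X A mu R V" and proj: "projection_game k X A R V"
    and ik: "i < k" and pk: "p < k" and strat: "f \<in> strategies k n X A"
  shows "(rep_accept_prob k n (pair_pmf mu (pmf_of_set {..<R})) (\<lambda>(q, r) j. q ! j) (\<lambda>(q, r) a. V r q a) f)\<^sup>2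
    \<le> rep_accept_prob k n (pair_pmf (link_pmf mu i) (pmf_of_set {..<R}))
       (\<lambda>(qq, r) j. Pi_swap p qq ! j) (\<lambda>((q, q'), r) a. q \<noteq> q' \<or> V r q a) f"
proof -
  define U where "U = pmf_of_set {..<R}"
  define Zd where "Zd = pair_pmf (map_pmf (\<lambda>q. q ! i) mu) U"
  define K :: "'x \<times> nat \<Rightarrow> ('x list \<times> nat) pmf" where "K = (\<lambda>(v,r). map_pmf (\<lambda>q. (q,r)) (cond_pmf mu {q. q ! i = v}))"
  define B where "B = bind_pmf Zd (\<lambda>z. pair_pmf (K z) (K z))"
  define F :: "('x list \<times> nat) \<times> ('x list \<times> nat) \<Rightarrow> ('x list \<times> 'x list) \<times> nat"
    where "F = (\<lambda>((q,r),(q',r')). ((q,q'),r))"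
  define u :: "('x list \<times> 'x list) \<times> nat" where "u = undefined"
  define d2 where "d2 = ((fst (fst u), snd u), (snd (fst u), 0::nat))"
  have Fd2: "F d2 = undefined" by (simp add: F_def d2_def u_def)
  define WG where "WG = {ss. \<forall>m<n. (\<lambda>(q, r) a. V r q a) (ss m)
     (map (\<lambda>j. f j (map (\<lambda>m'. (\<lambda>(q, r) j. q ! j) (ss m') j) [0..<n]) ! m) [0..<k])}"
  define ET where "ET = {ss. \<forall>m<n. (\<lambda>((q, q'), r) a. q \<noteq> q' \<or> V r q a) (ss m)
     (map (\<lambda>j. f j (map (\<lambda>m'. (\<lambda>(qq, r) j. Pi_swap p qq ! j) (ss m') j) [0..<n]) ! m) [0..<k])}"
  define E where "E = {ss. (\<lambda>m. if m<n then fst (ss m) else undefined) \<in> WG \<and>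
                         (\<lambda>m. if m<n then snd (ss m) else undefined) \<in> WG}"
  have R1: "R \<ge> 1" using game by (simp add: rp_game_def)
  have accG: "rep_accept_prob k n (pair_pmf mu (pmf_of_set {..<R})) (\<lambda>(q, r) j. q ! j) (\<lambda>(q, r) a. V r q a) f
      = measure_pmf.prob (Pi_pmf {..<n} undefined (\<lambda>_. bind_pmf Zd K)) WG"
    unfolding rep_accept_prob_def WG_def Zd_def K_def U_def by (subst E1[where i=i]) (rule refl)
  have accT: "rep_accept_prob k n (pair_pmf (link_pmf mu i) (pmf_of_set {..<R}))
       (\<lambda>(qq, r) j. Pi_swap p qq ! j) (\<lambda>((q, q'), r) a. q \<noteq> q' \<or> V r q a) f
      = measure_pmf.prob (Pi_pmf {..<n} undefined (\<lambda>_. map_pmf F B)) ET"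
    unfolding rep_accept_prob_def ET_def B_def Zd_def K_def U_def F_def by (subst E2) (rule refl)
  have PiF: "Pi_pmf {..<n} undefined (\<lambda>_. map_pmf F B) = map_pmf (\<lambda>h. F \<circ> h) (Pi_pmf {..<n} d2 (\<lambda>_. B))"
    by (rule Pi_pmf_map) (simp_all add: Fd2)
  have c: "(measure_pmf.prob (Pi_pmf {..<n} undefined (\<lambda>_. bind_pmf Zd K)) WG)\<^sup>2
      \<le> measure_pmf.prob (Pi_pmf {..<n} d2 (\<lambda>_. B)) E"
    unfolding B_def E_def by (rule core)
  have incl: "E \<inter> set_pmf (Pi_pmf {..<n} d2 (\<lambda>_. B)) \<subseteq> (\<lambda>h. F \<circ> h) -` ET"
  proof
    fix ss assume ss: "ss \<in> E \<inter> set_pmf (Pi_pmf {..<n} d2 (\<lambda>_. B))"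
    have sB: "ss m \<in> set_pmf B" if "m < n" for m
      using ss that set_Pi_pmf_subset'[of "{..<n}" d2 "\<lambda>_. B"] by (auto simp: PiE_dflt_def)
    define Q1 where "Q1 m = fst (fst (ss m))" for m
    define Q2 where "Q2 m = fst (snd (ss m))" for m
    define r where "r m = snd (fst (ss m))" for m
    have shape: "ss m = ((Q1 m, r m), (Q2 m, r m)) \<and> Q1 m \<in> set_pmf mu \<and> Q2 m \<in> set_pmf mu
        \<and> Q1 m ! i = Q2 m ! i \<and> r m < R" if "m < n" for m
      using supp_B[OF R1 sB[OF that, unfolded B_def Zd_def K_def U_def]]
      by (auto simp: Q1_def Q2_def r_def)
    have hQ: "length q = k \<and> (\<forall>j<k. q ! j \<in> X j)" if "q \<in> set_pmf mu" for q
      using game that by (simp add: rp_game_def)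
    have mq1: "map (\<lambda>m'. fst (if m' < n then fst (ss m') else undefined) ! j) [0..<n]
       = map (\<lambda>m'. fst (fst (ss m')) ! j) [0..<n]" for j by (rule map_cong) auto
    have mq2: "map (\<lambda>m'. fst (if m' < n then snd (ss m') else undefined) ! j) [0..<n]
       = map (\<lambda>m'. fst (snd (ss m')) ! j) [0..<n]" for j by (rule map_cong) auto
    have W1: "\<forall>m<n. V (r m) (Q1 m) (map (\<lambda>j. f j (map (\<lambda>m'. Q1 m' ! j) [0..<n]) ! m) [0..<k])"
    proof (intro allI impI)
      fix m assume mn: "m < n"
      have "(\<lambda>m. if m<n then fst (ss m) else undefined) \<in> WG" using ss by (simp add: E_def)
      then have "(\<lambda>(q, r) a. V r q a) (fst (ss m))
         (map (\<lambda>j. f j (map (\<lambda>m'. (\<lambda>(q, r) j. q ! j) (if m' < n then fst (ss m') else undefined) j) [0..<n]) ! m) [0..<k])"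
        using mn unfolding WG_def by auto
      then show "V (r m) (Q1 m) (map (\<lambda>j. f j (map (\<lambda>m'. Q1 m' ! j) [0..<n]) ! m) [0..<k])"
        by (simp add: split_beta Q1_def r_def mq1)
    qed
    have W2: "\<forall>m<n. V (r m) (Q2 m) (map (\<lambda>j. f j (map (\<lambda>m'. Q2 m' ! j) [0..<n]) ! m) [0..<k])"
    proof (intro allI impI)
      fix m assume mn: "m < n"
      have "(\<lambda>m. if m<n then snd (ss m) else undefined) \<in> WG" using ss by (simp add: E_def)
      then have "(\<lambda>(q, r) a. V r q a) (snd (ss m))
         (map (\<lambda>j. f j (map (\<lambda>m'. (\<lambda>(q, r) j. q ! j) (if m' < n then snd (ss m') else undefined) j) [0..<n]) ! m) [0..<k])"
        using mn unfolding WG_def by auto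
      moreover have "snd (snd (ss m)) = r m" using shape[OF mn] by (metis snd_conv)
      ultimately show "V (r m) (Q2 m) (map (\<lambda>j. f j (map (\<lambda>m'. Q2 m' ! j) [0..<n]) ! m) [0..<k])"
        by (simp add: split_beta Q2_def mq2)
    qed
    have comb: "\<forall>m<n. Q1 m \<noteq> Q2 m \<or>
       V (r m) (Q1 m) (map (\<lambda>j. f j (map (\<lambda>m'. Pi_swap p (Q1 m', Q2 m') ! j) [0..<n]) ! m) [0..<k])"
      by (rule combine[OF proj strat ik pk]) (use shape hQ W1 W2 in auto)
    have Fss: "F (ss m) = ((Q1 m, Q2 m), r m)" if "m < n" for m
      using shape[OF that] by (simp add: F_def Q1_def Q2_def r_def split_beta)
    have "(F \<circ> ss) \<in> ET"
      unfolding ET_def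
    proof (intro CollectI allI impI)
      fix m assume mn: "m < n"
      have mp: "map (\<lambda>m'. (\<lambda>(qq, r) j. Pi_swap p qq ! j) ((F \<circ> ss) m') j) [0..<n]
          = map (\<lambda>m'. Pi_swap p (Q1 m', Q2 m') ! j) [0..<n]" for j
        by (rule map_cong) (auto simp: Fss)
      show "(\<lambda>((q, q'), r) a. q \<noteq> q' \<or> V r q a) ((F \<circ> ss) m)
          (map (\<lambda>j. f j (map (\<lambda>m'. (\<lambda>(qq, r) j. Pi_swap p qq ! j) ((F \<circ> ss) m') j) [0..<n]) ! m) [0..<k])"
        unfolding mp using comb mn by (simp add: Fss)
    qed
    then show "ss \<in> (\<lambda>h. F \<circ> h) -` ET" by simp
  qed
  have "measure_pmf.prob (Pi_pmf {..<n} d2 (\<lambda>_. B)) E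
      = measure_pmf.prob (Pi_pmf {..<n} d2 (\<lambda>_. B)) (E \<inter> set_pmf (Pi_pmf {..<n} d2 (\<lambda>_. B)))"
    by (simp add: measure_Int_set_pmf)
  also have "\<dots> \<le> measure_pmf.prob (Pi_pmf {..<n} d2 (\<lambda>_. B)) ((\<lambda>h. F \<circ> h) -` ET)"
    by (rule measure_pmf.finite_measure_mono[OF incl]) simp
  also have "\<dots> = measure_pmf.prob (Pi_pmf {..<n} undefined (\<lambda>_. map_pmf F B)) ET"
    by (simp add: PiF)
  finally show ?thesis using c accG accT by simp
qed


theorem claim3p5:
  fixes k :: nat and X :: "nat \<Rightarrow> 'x set" and A :: "nat \<Rightarrow> 'a set"
    and mu :: "'x list pmf" and R :: nat and V :: "nat \<Rightarrow> 'x list \<Rightarrow> 'a list \<Rightarrow> bool"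
    and n i p :: nat
  assumes "rp_game k X A mu R V"
    and "projection_game k X A R V"
    and "n \<ge> 1" and "i < k" and "p < k"
  shows "val_T_rep k X A mu R V i p n \<ge> (val_rep k X A mu R V n)\<^sup>2"
proof -
  define S where "S = strategies k n X A"
  define aG where "aG f = rep_accept_prob k n (pair_pmf mu (pmf_of_set {..<R})) (\<lambda>(q, r) j. q ! j) (\<lambda>(q, r) a. V r q a) f"
    for f :: "nat \<Rightarrow> 'x list \<Rightarrow> 'a list"
  define aT where "aT f = rep_accept_prob k n (pair_pmf (link_pmf mu i) (pmf_of_set {..<R}))
       (\<lambda>(qq, r) j. Pi_swap p qq ! j) (\<lambda>((q, q'), r) a. q \<noteq> q' \<or> V r q a) f"
    for f :: "nat \<Rightarrow> 'x list \<Rightarrow> 'a list"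
  have vG: "val_rep k X A mu R V n = (SUP f\<in>S. aG f)"
    by (simp add: val_rep_def rep_val_def S_def aG_def)
  have vT: "val_T_rep k X A mu R V i p n = (SUP f\<in>S. aT f)"
    by (simp add: val_T_rep_def rep_val_def S_def aT_def)
  define f0 :: "nat \<Rightarrow> 'x list \<Rightarrow> 'a list" where "f0 j ys = replicate n (SOME a. a \<in> A j)" for j ys
  have f0S: "f0 \<in> S"
    unfolding S_def strategies_def
  proof (intro CollectI allI impI)
    fix j ys assume j: "j < k" and "length ys = n \<and> set ys \<subseteq> X j"
    have "A j \<noteq> {}" using assms(1) j by (simp add: rp_game_def)
    then have "(SOME a. a \<in> A j) \<in> A j" by (simp add: some_in_eq)
    then show "length (f0 j ys) = n \<and> set (f0 j ys) \<subseteq> A j" by (auto simp: f0_def)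
  qed
  then have Sne: "S \<noteq> {}" by auto
  have aG01: "0 \<le> aG f" "aG f \<le> 1" for f by (simp_all add: aG_def rep_accept_prob_def)
  have aT01: "0 \<le> aT f" "aT f \<le> 1" for f by (simp_all add: aT_def rep_accept_prob_def)
  have bG: "bdd_above (aG ` S)" using aG01 by (intro bdd_aboveI[of _ 1]) auto
  have bT: "bdd_above (aT ` S)" using aT01 by (intro bdd_aboveI[of _ 1]) auto
  have le: "aG f \<le> sqrt (SUP f\<in>S. aT f)" if f: "f \<in> S" for f
  proof -
    have "(aG f)\<^sup>2 \<le> aT f"
      unfolding aG_def aT_def by (rule strat_ineq[OF assms(1,2,4,5)]) (use f in \<open>simp add: S_def\<close>)
    also have "\<dots> \<le> (SUP f\<in>S. aT f)" by (rule cSUP_upper[OF f bT])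
    finally have "sqrt ((aG f)\<^sup>2) \<le> sqrt (SUP f\<in>S. aT f)" by (rule real_sqrt_le_mono)
    then show ?thesis using aG01(1)[of f] by simp
  qed
  have "(SUP f\<in>S. aG f) \<le> sqrt (SUP f\<in>S. aT f)" by (rule cSUP_least[OF Sne le])
  moreover have "0 \<le> (SUP f\<in>S. aG f)"
    using aG01(1)[of f0] cSUP_upper[OF f0S bG] by linarith
  moreover have "0 \<le> (SUP f\<in>S. aT f)"
    using aT01(1)[of f0] cSUP_upper[OF f0S bT] by linarith
  ultimately have "(SUP f\<in>S. aG f)\<^sup>2 \<le> (SUP f\<in>S. aT f)"
    by (metis power_mono real_sqrt_pow2)
  then show ?thesis using vG vT by simp
qed

end
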